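(* Let $A\in\mathbb{R}^{m\times n}$, $b\in\mathbb{R}^m$, and let $Q_k=(q_1,\dots,q_k)$, $k=1,2,\dots$, be the matrices with orthonormal columns generated by the Golub–Kahan bidiagonalization of $A$ started with $b$ (described in the context). For each $k$ let $Q_k^{\perp}\in\mathbb{R}^{n\times(n-k)}$ be a matrix with orthonormal columns such that $(Q_k\ \ Q_k^{\perp})$ is an orthogonal matrix. Let $L\in\mathbb{R}^{p\times n}$. When $p\ge n-k$, we have $$\kappa(LQ_k^{\perp})\ \ge\ \kappa(LQ_{k+1}^{\perp}),\qquad k=2,3,\dots,n-1,$$ where for a matrix $M$ with $r$ columns, $\kappa(M)=\sigma_{\max}(M)/\sigma_{\min}(M)$, $\sigma_{\min}(M)$ being the $r$-th (smallest) singular value of $M$.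
   Context: Golub–Kahan bidiagonalization: set $\beta_1=\|b\|$, $p_1=b/\beta_1$, $\beta_1q_0=0$, and for $i=1,2,\dots$ compute $\alpha_iq_i=A^Tp_i-\beta_iq_{i-1}$ and $\beta_{i+1}p_{i+1}=Aq_i-\alpha_ip_i$, with $\alpha_i,\beta_{i+1}\ge0$ chosen so that $\|q_i\|=\|p_{i+1}\|=1$ (no breakdown assumed). The vectors $q_1,q_2,\dots$ are orthonormal and $Q_k=(q_1,\dots,q_k)$. *)

theory Defs
  imports "Jordan_Normal_Form.Matrix" "Jordan_Normal_Form.Char_Poly" "HOL-Library.Extended_Real"
begin

definition vnorm :: "real vec \<Rightarrow> real" where
  "vnorm v = sqrt (v \<bullet> v)"

definition orthonormal_cols :: "real mat \<Rightarrow> bool" where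
  "orthonormal_cols M \<longleftrightarrow> transpose_mat M * M = 1\<^sub>m (dim_col M)"

definition hcat :: "'a mat \<Rightarrow> 'a mat \<Rightarrow> 'a mat" where
  "hcat M N = mat (dim_row M) (dim_col M + dim_col N)
     (\<lambda>(i,j). if j < dim_col M then M $$ (i,j) else N $$ (i, j - dim_col M))"

definition orthogonal_square :: "real mat \<Rightarrow> bool" where
  "orthogonal_square M \<longleftrightarrow> dim_row M = dim_col M \<and> transpose_mat M * M = 1\<^sub>m (dim_col M)"

definition singular_values :: "real mat \<Rightarrow> real set" where
  "singular_values M = {sqrt e | e. eigenvalue (transpose_mat M * M) e}"

definition sigma_max :: "real mat \<Rightarrow> real" where
  "sigma_max M = Max (singular_values M)"

definition sigma_min :: "real mat \<Rightarrow> real" where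
  "sigma_min M = Min (singular_values M)"

definition kappa :: "real mat \<Rightarrow> ereal" where
  "kappa M = (if dim_col M = 0 then 1
              else if sigma_min M = 0 then \<infinity>
              else ereal (sigma_max M / sigma_min M))"

definition Qmat :: "nat \<Rightarrow> (nat \<Rightarrow> real vec) \<Rightarrow> nat \<Rightarrow> real mat" where
  "Qmat n q k = mat_of_cols n (map q [1..<Suc k])"

end

theory Submission
  imports Defs "HOL-Analysis.Function_Topology"
begin

lemma sphere_max:
  fixes f :: "(nat \<Rightarrow> real) \<Rightarrow> real" and r::nat
  assumes r: "r > 0" and f: "continuous_on UNIV f"
  shows "\<exists>g. (\<forall>i\<ge>r. g i = 0) \<and> (\<Sum>i<r. (g i)^2) = 1 \<and>
     (\<forall>h. (\<forall>i\<ge>r. h i = 0) \<longrightarrow> (\<Sum>i<r. (h i)^2) = 1 \<longrightarrow> f h \<le> f g)"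
proof -
  define T where "T = (\<lambda>i::nat. if i < r then {-1..1::real} else {0})"
  define S where "S = Pi UNIV T \<inter> {h. (\<Sum>i<r. (h i)^2) = 1}"
  have "compactin (product_topology (\<lambda>i. euclidean) UNIV) (PiE UNIV T)"
    by (subst compactin_PiE) (auto simp: T_def)
  hence c1: "compact (Pi UNIV T)"
    by (simp add: euclidean_product_topology PiE_UNIV_domain)
  have cl: "closed {h::nat\<Rightarrow>real. (\<Sum>i<r. (h i)^2) = 1}"
    by (intro closed_Collect_eq continuous_intros) auto
  have cS: "compact S" unfolding S_def using c1 cl by blast
  have mem: "h \<in> S" if "\<forall>i\<ge>r. h i = 0" "(\<Sum>i<r. (h i)^2) = 1" for h
  proof -
    have "\<bar>h i\<bar> \<le> 1" if "i < r" for i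
    proof -
      have "(h i)^2 \<le> (\<Sum>i<r. (h i)^2)"
        by (rule member_le_sum) (use \<open>i<r\<close> in auto)
      hence "(h i)^2 \<le> 1^2" using \<open>(\<Sum>i<r. (h i)^2) = 1\<close> by simp
      thus ?thesis using abs_le_square_iff[of "h i" 1] by simp
    qed
    thus ?thesis using that unfolding S_def T_def by (auto simp: abs_le_iff)
  qed
  have "(\<Sum>i<r. ((\<lambda>i. if i = 0 then 1 else 0::real) i)^2) = (\<Sum>i<r. if i = 0 then 1 else 0)"
    by (rule sum.cong) auto
  also have "\<dots> = 1" using r by (simp add: sum.delta)
  finally have "(\<lambda>i. if i = 0 then 1 else 0::real) \<in> S"
    by (intro mem) (use r in auto)
  hence ne: "S \<noteq> {}" by auto
  from continuous_attains_sup[OF cS ne continuous_on_subset[OF f]]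
  obtain g where g: "g \<in> S" "\<forall>y\<in>S. f y \<le> f g" by auto
  show ?thesis
    apply (rule exI[of _ g])
    using g mem unfolding S_def T_def by (auto split: if_splits)
qed

lemma self_dot_nonneg: "(v::real vec) \<bullet> v \<ge> 0"
  unfolding scalar_prod_def by (auto intro: sum_nonneg)

lemma self_dot_zero:
  assumes v: "(v::real vec) \<in> carrier_vec r" and z: "v \<bullet> v = 0"
  shows "v = 0\<^sub>v r"
proof -
  have "(\<Sum>i\<in>{0..<r}. v $ i * v $ i) = 0" using z v unfolding scalar_prod_def by auto
  hence "\<forall>i\<in>{0..<r}. v $ i * v $ i = 0" by (subst (asm) sum_nonneg_eq_0_iff) auto
  thus ?thesis using v by (intro eq_vecI) auto
qed

lemma quad_eig:
  fixes G :: "real mat"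
  assumes G: "G \<in> carrier_mat r r" and sym: "transpose_mat G = G"
    and x0: "x0 \<in> carrier_vec r" and sg: "\<sigma> * \<sigma> = 1"
    and le: "\<And>x. x \<in> carrier_vec r \<Longrightarrow> \<sigma> * (x \<bullet> (G *\<^sub>v x) - c * (x \<bullet> x)) \<le> 0"
    and eq: "x0 \<bullet> (G *\<^sub>v x0) = c * (x0 \<bullet> x0)"
  shows "G *\<^sub>v x0 = c \<cdot>\<^sub>v x0"
proof -
  define w where "w = c \<cdot>\<^sub>v x0 - G *\<^sub>v x0"
  have Gx0: "G *\<^sub>v x0 \<in> carrier_vec r" using G x0 by auto
  have w: "w \<in> carrier_vec r" unfolding w_def using G x0 by auto
  have Gw: "G *\<^sub>v w \<in> carrier_vec r" using G w by auto
  define a where "a = x0 \<bullet> (G *\<^sub>v x0)"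
  define b1 where "b1 = x0 \<bullet> (G *\<^sub>v w)"
  define b2 where "b2 = w \<bullet> (G *\<^sub>v x0)"
  define e where "e = w \<bullet> (G *\<^sub>v w)"
  define f where "f = x0 \<bullet> x0"
  define g where "g = x0 \<bullet> w"
  define h where "h = w \<bullet> w"
  have b12: "b1 = b2"
  proof -
    have "b1 = (transpose_mat G *\<^sub>v x0) \<bullet> w"
      unfolding b1_def by (rule transpose_vec_mult_scalar[OF G w x0, symmetric])
    also have "\<dots> = w \<bullet> (G *\<^sub>v x0)" using sym Gx0 w by (simp add: comm_scalar_prod[of _ r])
    finally show ?thesis unfolding b2_def .
  qed
  have hg: "h = c * g - b2"
  proof -
    have "h = (c \<cdot>\<^sub>v x0 - G *\<^sub>v x0) \<bullet> w" unfolding h_def w_def ..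
    also have "\<dots> = (c \<cdot>\<^sub>v x0) \<bullet> w - (G *\<^sub>v x0) \<bullet> w"
      by (rule minus_scalar_prod_distrib[of _ r]) (use x0 G w in auto)
    also have "\<dots> = c * g - b2" unfolding g_def b2_def using x0 w Gx0
      by (simp add: comm_scalar_prod[of _ r])
    finally show ?thesis .
  qed
  have quad: "\<sigma> * ((a + 2*t*b2 + t*t*e) - c * (f + 2*t*g + t*t*h)) \<le> 0" for t
  proof -
    define x where "x = x0 + t \<cdot>\<^sub>v w"
    have x: "x \<in> carrier_vec r" unfolding x_def using x0 w by auto
    have Gx: "G *\<^sub>v x = G *\<^sub>v x0 + t \<cdot>\<^sub>v (G *\<^sub>v w)"
      unfolding x_def using G x0 w by (simp add: mult_add_distrib_mat_vec[of _ r r] mult_mat_vec[of _ r r])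
    have "x \<bullet> (G *\<^sub>v x) = a + t * b1 + t * b2 + t*t*e"
      unfolding Gx unfolding x_def a_def b1_def b2_def e_def using x0 w Gx0 Gw
      by (simp add: add_scalar_prod_distrib[of _ r] scalar_prod_add_distrib[of _ r] algebra_simps)
    moreover have "x \<bullet> x = f + 2*t*g + t*t*h"
      unfolding x_def f_def g_def h_def using x0 w
      by (simp add: add_scalar_prod_distrib[of _ r] scalar_prod_add_distrib[of _ r] algebra_simps
          comm_scalar_prod[of w r x0])
    ultimately show ?thesis using le[OF x] b12 by (simp add: algebra_simps)
  qed
  have a: "a = c * f" using eq unfolding a_def f_def .
  define K where "K = - \<sigma> * (e - c * h)"
  have lin: "2 * s * h \<le> s * s * K" for s
  proof -
    have "\<sigma> * ((a + 2*(-\<sigma>*s)*b2 + (-\<sigma>*s)*(-\<sigma>*s)*e) - c * (f + 2*(-\<sigma>*s)*g + (-\<sigma>*s)*(-\<sigma>*s)*h)) \<le> 0"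
      by (rule quad)
    hence 1: "\<sigma> * (2*(-\<sigma>*s)*(b2 - c*g) + (\<sigma>*\<sigma>)*(s*s)*(e - c*h)) \<le> 0" using a
      by (simp add: algebra_simps)
    have "b2 - c*g = -h" using hg by simp
    with 1 have 2: "\<sigma> * (2*(-\<sigma>*s)*(-h) + (\<sigma>*\<sigma>)*(s*s)*(e - c*h)) \<le> 0" by simp
    have "\<sigma> * (2*(-\<sigma>*s)*(-h) + (\<sigma>*\<sigma>)*(s*s)*(e - c*h)) =
       (\<sigma>*\<sigma>)*2*s*h + (\<sigma>*\<sigma>)*(\<sigma>*(s*s)*(e - c*h))" by (simp add: algebra_simps)
    with 2 sg have "2*s*h + \<sigma>*(s*s)*(e - c*h) \<le> 0" by simp
    thus ?thesis unfolding K_def using sg by (simp add: algebra_simps)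
  qed
  have h0: "h \<ge> 0" unfolding h_def by (rule self_dot_nonneg)
  have "h \<le> 0"
  proof (rule ccontr)
    assume hp: "\<not> h \<le> 0"
    show False
    proof (cases "K > 0")
      case True
      have "2 * (h/K) * h \<le> (h/K) * (h/K) * K" by (rule lin)
      also have "\<dots> = (h/K) * h" using True by (simp add: field_simps)
      finally have "(h/K) * h \<le> 0" by simp
      moreover have "(h/K) * h > 0" using True hp by simp
      ultimately show False by simp
    next
      case False
      have "2 * 1 * h \<le> 1 * 1 * K" by (rule lin)
      thus False using False hp by simp
    qed
  qed
  hence w0: "w = 0\<^sub>v r" using h0 w self_dot_zero[of w r] unfolding h_def by simp
  show ?thesis
  proof (intro eq_vecI)
    fix i assume "i < dim_vec (c \<cdot>\<^sub>v x0)"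
    hence i: "i < r" using x0 by simp
    have "(c \<cdot>\<^sub>v x0 - G *\<^sub>v x0) $ i = 0" using w0 i unfolding w_def by simp
    thus "(G *\<^sub>v x0) $ i = (c \<cdot>\<^sub>v x0) $ i" using i x0 Gx0 G by simp
  next
    show "dim_vec (G *\<^sub>v x0) = dim_vec (c \<cdot>\<^sub>v x0)" using G x0 by simp
  qed
qed

lemma quad_sum:
  fixes G :: "real mat"
  assumes G: "G \<in> carrier_mat r r" and x: "x \<in> carrier_vec r"
  shows "x \<bullet> (G *\<^sub>v x) = (\<Sum>i<r. x $ i * (\<Sum>j<r. G $$ (i,j) * x $ j))"
  using G x unfolding scalar_prod_def
  by (auto simp: atLeast0LessThan row_def scalar_prod_def intro!: sum.cong)

lemma rayleigh_attain:
  fixes G :: "real mat"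
  assumes G: "G \<in> carrier_mat r r" and r: "r > 0"
  shows "\<exists>x0\<in>carrier_vec r. x0 \<bullet> x0 = 1 \<and>
     (\<forall>x\<in>carrier_vec r. x \<bullet> x = 1 \<longrightarrow> \<sigma> * (x \<bullet> (G *\<^sub>v x)) \<le> \<sigma> * (x0 \<bullet> (G *\<^sub>v x0)))"
proof -
  define f where "f = (\<lambda>h::nat\<Rightarrow>real. \<sigma> * (\<Sum>i<r. h i * (\<Sum>j<r. G $$ (i,j) * h j)))"
  have cf: "continuous_on UNIV f" unfolding f_def by (intro continuous_intros) auto
  from sphere_max[OF r cf] obtain g where g0: "\<forall>i\<ge>r. g i = 0" and g1: "(\<Sum>i<r. (g i)^2) = 1"
    and gm: "\<And>h. (\<forall>i\<ge>r. h i = 0) \<Longrightarrow> (\<Sum>i<r. (h i)^2) = 1 \<Longrightarrow> f h \<le> f g" by blast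
  define x0 where "x0 = vec r g"
  have x0: "x0 \<in> carrier_vec r" unfolding x0_def by simp
  have fx: "f h = \<sigma> * (vec r h \<bullet> (G *\<^sub>v vec r h))" for h :: "nat \<Rightarrow> real"
    unfolding f_def by (subst quad_sum[OF G]) auto
  have nx: "vec r h \<bullet> vec r h = (\<Sum>i<r. (h i)^2)" for h :: "nat \<Rightarrow> real"
    unfolding scalar_prod_def by (auto simp: atLeast0LessThan power2_eq_square intro!: sum.cong)
  show ?thesis
  proof (intro bexI[OF _ x0] conjI ballI impI)
    show "x0 \<bullet> x0 = 1" unfolding x0_def nx g1 ..
    fix x :: "real vec" assume x: "x \<in> carrier_vec r" and x1: "x \<bullet> x = 1"
    define h where "h = (\<lambda>i. if i < r then x $ i else 0)"
    have vh: "vec r h = x" unfolding h_def using x by (intro eq_vecI) auto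
    have "f h \<le> f g" by (rule gm) (use x1 nx[of h] vh in \<open>auto simp: h_def\<close>)
    thus "\<sigma> * (x \<bullet> (G *\<^sub>v x)) \<le> \<sigma> * (x0 \<bullet> (G *\<^sub>v x0))"
      unfolding fx vh x0_def .
  qed
qed

lemma MtM_quad:
  fixes M :: "real mat"
  assumes M: "M \<in> carrier_mat p r" and x: "x \<in> carrier_vec r"
  shows "x \<bullet> ((transpose_mat M * M) *\<^sub>v x) = (M *\<^sub>v x) \<bullet> (M *\<^sub>v x)"
proof -
  have Mx: "M *\<^sub>v x \<in> carrier_vec p" using M x by auto
  have "(transpose_mat M * M) *\<^sub>v x = transpose_mat M *\<^sub>v (M *\<^sub>v x)"
    using M x by (intro assoc_mult_mat_vec) auto
  moreover have "x \<bullet> (transpose_mat M *\<^sub>v (M *\<^sub>v x)) = (transpose_mat M *\<^sub>v (M *\<^sub>v x)) \<bullet> x"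
    by (rule comm_scalar_prod[of _ r]) (use M x in auto)
  moreover have "(transpose_mat M *\<^sub>v (M *\<^sub>v x)) \<bullet> x = (M *\<^sub>v x) \<bullet> (M *\<^sub>v x)"
    by (rule transpose_vec_mult_scalar[OF M x Mx])
  ultimately show ?thesis by simp
qed

lemma extreme_eig:
  fixes M :: "real mat"
  assumes M: "M \<in> carrier_mat p r" and r: "r > 0" and sg: "\<sigma> * \<sigma> = 1"
    and Gdef: "G = transpose_mat M * M"
  shows "\<exists>x0\<in>carrier_vec r. x0 \<bullet> x0 = 1 \<and> eigenvalue G (x0 \<bullet> (G *\<^sub>v x0)) \<and>
     (\<forall>e. eigenvalue G e \<longrightarrow> \<sigma> * e \<le> \<sigma> * (x0 \<bullet> (G *\<^sub>v x0))) \<and>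
     (\<forall>x\<in>carrier_vec r. x \<bullet> x = 1 \<longrightarrow> \<sigma> * (x \<bullet> (G *\<^sub>v x)) \<le> \<sigma> * (x0 \<bullet> (G *\<^sub>v x0)))"
proof -
  have G: "G \<in> carrier_mat r r" using M Gdef by auto
  have sym: "transpose_mat G = G" unfolding Gdef using M by (simp add: transpose_mult[of _ r p _ r])
  obtain x0 where x0: "x0 \<in> carrier_vec r" and x01: "x0 \<bullet> x0 = 1"
    and mx: "\<And>x. x \<in> carrier_vec r \<Longrightarrow> x \<bullet> x = 1 \<Longrightarrow> \<sigma> * (x \<bullet> (G *\<^sub>v x)) \<le> \<sigma> * (x0 \<bullet> (G *\<^sub>v x0))"
    using rayleigh_attain[OF G r, of \<sigma>] by blast
  define c where "c = x0 \<bullet> (G *\<^sub>v x0)"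
  have le: "\<sigma> * (x \<bullet> (G *\<^sub>v x) - c * (x \<bullet> x)) \<le> 0" if x: "x \<in> carrier_vec r" for x
  proof (cases "x = 0\<^sub>v r")
    case True
    thus ?thesis using G by simp
  next
    case False
    define d where "d = x \<bullet> x"
    have "d \<noteq> 0" using self_dot_zero[OF x] False unfolding d_def by auto
    hence d: "d > 0" using self_dot_nonneg[of x] unfolding d_def by simp
    define u where "u = (1 / sqrt d) \<cdot>\<^sub>v x"
    have u: "u \<in> carrier_vec r" unfolding u_def using x by simp
    have sdd: "sqrt d * sqrt d = d" using d by (metis abs_of_pos real_sqrt_mult_self)
    have "(1 / sqrt d) * (1 / sqrt d) = 1 / (sqrt d * sqrt d)" by simp
    hence sq: "(1 / sqrt d) * (1 / sqrt d) = 1 / d" using sdd by simp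
    have uu: "u \<bullet> u = 1" unfolding u_def using x d sq unfolding d_def[symmetric]
      by (simp add: d_def[symmetric])
    have uGu: "u \<bullet> (G *\<^sub>v u) = (x \<bullet> (G *\<^sub>v x)) / d"
      unfolding u_def using x G sq by (simp add: mult_mat_vec[of _ r r])
    from mx[OF u uu] have "\<sigma> * ((x \<bullet> (G *\<^sub>v x)) / d) \<le> \<sigma> * c" unfolding uGu c_def .
    hence "\<sigma> * (x \<bullet> (G *\<^sub>v x)) \<le> \<sigma> * c * d" using d
      by (simp add: pos_divide_le_eq)
    thus ?thesis using d unfolding d_def[symmetric] by (simp add: algebra_simps)
  qed
  have eq: "x0 \<bullet> (G *\<^sub>v x0) = c * (x0 \<bullet> x0)" unfolding c_def x01 by simp
  have ev: "G *\<^sub>v x0 = c \<cdot>\<^sub>v x0" by (rule quad_eig[OF G sym x0 sg le eq])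
  have x0nz: "x0 \<noteq> 0\<^sub>v r" using x01 x0 by auto
  have eigc: "eigenvalue G c" unfolding eigenvalue_def eigenvector_def
    using x0 x0nz ev G by auto
  have allev: "\<sigma> * e \<le> \<sigma> * c" if eve: "eigenvalue G e" for e
  proof -
    obtain v where v: "v \<in> carrier_vec r" "v \<noteq> 0\<^sub>v r" "G *\<^sub>v v = e \<cdot>\<^sub>v v"
      using eve G unfolding eigenvalue_def eigenvector_def by auto
    have "v \<bullet> v \<noteq> 0" using self_dot_zero[OF v(1)] v(2) by auto
    hence d: "v \<bullet> v > 0" using self_dot_nonneg[of v] by simp
    have "v \<bullet> (G *\<^sub>v v) = e * (v \<bullet> v)" using v by simp
    with le[OF v(1)] have "\<sigma> * (e - c) * (v \<bullet> v) \<le> 0" by (simp add: algebra_simps)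
    hence "\<sigma> * (e - c) \<le> 0" using d by (simp add: mult_le_0_iff)
    thus ?thesis by (simp add: algebra_simps)
  qed
  show ?thesis
    using x0 x01 eigc allev mx unfolding c_def by blast
qed

lemma finite_eigenvalues:
  fixes G :: "real mat"
  assumes G: "G \<in> carrier_mat r r"
  shows "finite {e. eigenvalue G e}"
proof -
  have "char_poly G \<noteq> 0" using degree_monic_char_poly[OF G] by auto
  hence "finite {x. poly (char_poly G) x = 0}" by (rule poly_roots_finite)
  moreover have "{e. eigenvalue G e} = {x. poly (char_poly G) x = 0}"
    using eigenvalue_root_char_poly[OF G] by auto
  ultimately show ?thesis by simp
qed

lemma sv_char:
  fixes M :: "real mat"
  assumes M: "M \<in> carrier_mat p r" and r: "r > 0"
  shows "sigma_max M \<ge> 0" "sigma_min M \<ge> 0"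
   "\<exists>x0\<in>carrier_vec r. x0 \<bullet> x0 = 1 \<and> sigma_max M = sqrt ((M *\<^sub>v x0) \<bullet> (M *\<^sub>v x0))"
   "\<forall>x\<in>carrier_vec r. x \<bullet> x = 1 \<longrightarrow> (M *\<^sub>v x) \<bullet> (M *\<^sub>v x) \<le> (sigma_max M)^2"
   "\<exists>x1\<in>carrier_vec r. x1 \<bullet> x1 = 1 \<and> sigma_min M = sqrt ((M *\<^sub>v x1) \<bullet> (M *\<^sub>v x1))"
   "\<forall>x\<in>carrier_vec r. x \<bullet> x = 1 \<longrightarrow> (sigma_min M)^2 \<le> (M *\<^sub>v x) \<bullet> (M *\<^sub>v x)"
proof -
  define G where "G = transpose_mat M * M"
  have G: "G \<in> carrier_mat r r" using M G_def by auto
  define E where "E = {e. eigenvalue G e}"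
  have fE: "finite E" unfolding E_def by (rule finite_eigenvalues[OF G])
  have sv: "singular_values M = sqrt ` E" unfolding singular_values_def E_def G_def by auto
  have q: "x \<bullet> (G *\<^sub>v x) = (M *\<^sub>v x) \<bullet> (M *\<^sub>v x)" if "x \<in> carrier_vec r" for x
    unfolding G_def by (rule MtM_quad[OF M that])
  obtain x0 where x0: "x0 \<in> carrier_vec r" "x0 \<bullet> x0 = 1" "eigenvalue G (x0 \<bullet> (G *\<^sub>v x0))"
    "\<forall>e. eigenvalue G e \<longrightarrow> 1 * e \<le> 1 * (x0 \<bullet> (G *\<^sub>v x0))"
    "\<forall>x\<in>carrier_vec r. x \<bullet> x = 1 \<longrightarrow> 1 * (x \<bullet> (G *\<^sub>v x)) \<le> 1 * (x0 \<bullet> (G *\<^sub>v x0))"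
    using extreme_eig[OF M r _ G_def, of 1] by auto
  obtain x1 where x1: "x1 \<in> carrier_vec r" "x1 \<bullet> x1 = 1" "eigenvalue G (x1 \<bullet> (G *\<^sub>v x1))"
    "\<forall>e. eigenvalue G e \<longrightarrow> -1 * e \<le> -1 * (x1 \<bullet> (G *\<^sub>v x1))"
    "\<forall>x\<in>carrier_vec r. x \<bullet> x = 1 \<longrightarrow> -1 * (x \<bullet> (G *\<^sub>v x)) \<le> -1 * (x1 \<bullet> (G *\<^sub>v x1))"
    using extreme_eig[OF M r _ G_def, of "-1"] by auto
  define c0 where "c0 = (M *\<^sub>v x0) \<bullet> (M *\<^sub>v x0)"
  define c1 where "c1 = (M *\<^sub>v x1) \<bullet> (M *\<^sub>v x1)"
  have c0: "c0 \<ge> 0" unfolding c0_def by (rule self_dot_nonneg)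
  have c1: "c1 \<ge> 0" unfolding c1_def by (rule self_dot_nonneg)
  have c0E: "c0 \<in> E" and c0m: "\<forall>e\<in>E. e \<le> c0"
    using x0 q[OF x0(1)] unfolding E_def c0_def by auto
  have c1E: "c1 \<in> E" and c1m: "\<forall>e\<in>E. c1 \<le> e"
    using x1 q[OF x1(1)] unfolding E_def c1_def by auto
  have smax: "sigma_max M = sqrt c0" unfolding sigma_max_def sv
    by (rule Max_eqI) (use fE c0E c0m in auto)
  have smin: "sigma_min M = sqrt c1" unfolding sigma_min_def sv
    by (rule Min_eqI) (use fE c1E c1m in auto)
  show "sigma_max M \<ge> 0" "sigma_min M \<ge> 0" unfolding smax smin using c0 c1 by auto
  show "\<exists>x0\<in>carrier_vec r. x0 \<bullet> x0 = 1 \<and> sigma_max M = sqrt ((M *\<^sub>v x0) \<bullet> (M *\<^sub>v x0))"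
    using x0 smax c0_def by auto
  show "\<exists>x1\<in>carrier_vec r. x1 \<bullet> x1 = 1 \<and> sigma_min M = sqrt ((M *\<^sub>v x1) \<bullet> (M *\<^sub>v x1))"
    using x1 smin c1_def by auto
  show "\<forall>x\<in>carrier_vec r. x \<bullet> x = 1 \<longrightarrow> (M *\<^sub>v x) \<bullet> (M *\<^sub>v x) \<le> (sigma_max M)^2"
    using x0 q c0 unfolding smax c0_def by auto
  show "\<forall>x\<in>carrier_vec r. x \<bullet> x = 1 \<longrightarrow> (sigma_min M)^2 \<le> (M *\<^sub>v x) \<bullet> (M *\<^sub>v x)"
    using x1 q c1 unfolding smin c1_def by auto
qed

lemma sum_split_nat:
  fixes a b :: nat
  shows "(\<Sum>l\<in>{0..<a+b}. f l) = (\<Sum>l\<in>{0..<a}. f l) + (\<Sum>l\<in>{0..<b}. f (a+l))"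
  by (induction b) (auto simp: add.assoc)

lemma hcat_carrier:
  assumes "Q \<in> carrier_mat n a" "P \<in> carrier_mat n b"
  shows "hcat Q P \<in> carrier_mat n (a+b)"
  using assms unfolding hcat_def by auto

lemma hcat_index:
  assumes "Q \<in> carrier_mat n a" "P \<in> carrier_mat n b" "i < n" "j < a + b"
  shows "hcat Q P $$ (i,j) = (if j < a then Q $$ (i,j) else P $$ (i, j - a))"
  using assms unfolding hcat_def by auto

lemma orth_split:
  fixes Q P :: "real mat"
  assumes Q: "Q \<in> carrier_mat n a" and P: "P \<in> carrier_mat n b" and ab: "a + b = n"
    and o: "orthogonal_square (hcat Q P)"
  shows "Q * transpose_mat Q + P * transpose_mat P = 1\<^sub>m n"
proof -
  define H where "H = hcat Q P"
  have H: "H \<in> carrier_mat n n" unfolding H_def using hcat_carrier[OF Q P] ab by simp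
  have "transpose_mat H * H = 1\<^sub>m n" using o H unfolding H_def[symmetric] orthogonal_square_def by auto
  hence HH: "H * transpose_mat H = 1\<^sub>m n"
    using mat_mult_left_right_inverse[of "transpose_mat H" n H] H by auto
  show ?thesis
  proof (rule eq_matI)
    fix i j assume "i < dim_row (1\<^sub>m n :: real mat)" "j < dim_col (1\<^sub>m n :: real mat)"
    hence i: "i < n" and j: "j < n" by auto
    have "(Q * transpose_mat Q + P * transpose_mat P) $$ (i,j) =
        (\<Sum>l\<in>{0..<a}. Q $$ (i,l) * Q $$ (j,l)) + (\<Sum>l\<in>{0..<b}. P $$ (i,l) * P $$ (j,l))"
      using Q P i j by (simp add: scalar_prod_def)
    also have "\<dots> = (\<Sum>l\<in>{0..<a+b}. H $$ (i,l) * H $$ (j,l))"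
      unfolding sum_split_nat H_def using Q P i j ab by (simp add: hcat_index)
    also have "\<dots> = (H * transpose_mat H) $$ (i,j)"
      using H i j ab by (simp add: scalar_prod_def)
    finally show "(Q * transpose_mat Q + P * transpose_mat P) $$ (i,j) = 1\<^sub>m n $$ (i,j)"
      unfolding HH .
  qed (use Q P in auto)
qed

lemma orth_block_zero:
  fixes Q P :: "real mat"
  assumes Q: "Q \<in> carrier_mat n a" and P: "P \<in> carrier_mat n b" and ab: "a + b = n"
    and o: "orthogonal_square (hcat Q P)" and i: "i < a" and j: "j < b"
  shows "(\<Sum>l\<in>{0..<n}. Q $$ (l,i) * P $$ (l,j)) = 0"
proof -
  define H where "H = hcat Q P"
  have H: "H \<in> carrier_mat n n" unfolding H_def using hcat_carrier[OF Q P] ab by simp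
  have HH: "transpose_mat H * H = 1\<^sub>m n" using o H unfolding H_def[symmetric] orthogonal_square_def by auto
  have "(\<Sum>l\<in>{0..<n}. Q $$ (l,i) * P $$ (l,j)) = (\<Sum>l\<in>{0..<n}. H $$ (l,i) * H $$ (l,a+j))"
    by (rule sum.cong) (use Q P i j ab in \<open>auto simp: H_def hcat_index\<close>)
  also have "\<dots> = (transpose_mat H * H) $$ (i, a+j)"
    using H i j ab by (simp add: scalar_prod_def)
  also have "\<dots> = 0" unfolding HH using i j ab by simp
  finally show ?thesis .
qed

lemma Qmat_index:
  assumes "l < n" "i < k"
  shows "Qmat n q k $$ (l,i) = q (Suc i) $ l"
  using assms unfolding Qmat_def mat_of_cols_def by (simp add: nth_map del: upt_Suc)

theorem theorem3:
  fixes A :: "real mat" and b :: "real vec" and L :: "real mat"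
    and m n p :: nat
    and \<alpha> \<beta> :: "nat \<Rightarrow> real" and q pp :: "nat \<Rightarrow> real vec"
    and Qperp :: "nat \<Rightarrow> real mat"
    and k :: nat
  assumes A: "A \<in> carrier_mat m n"
    and b: "b \<in> carrier_vec m"
    and L: "L \<in> carrier_mat p n"
    (* Golub--Kahan bidiagonalization, no breakdown in the steps producing q_1..q_n *)
    and beta1: "\<beta> 1 = vnorm b"
    and p1: "pp 1 = (1 / \<beta> 1) \<cdot>\<^sub>v b"
    and q0: "q 0 = 0\<^sub>v n"
    and q_dim: "\<And>i. 1 \<le> i \<Longrightarrow> i \<le> n \<Longrightarrow> q i \<in> carrier_vec n"
    and p_dim: "\<And>i. 1 \<le> i \<Longrightarrow> i \<le> n \<Longrightarrow> pp i \<in> carrier_vec m"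
    and rec_q: "\<And>i. 1 \<le> i \<Longrightarrow> i \<le> n \<Longrightarrow>
                   \<alpha> i \<cdot>\<^sub>v q i = transpose_mat A *\<^sub>v pp i - \<beta> i \<cdot>\<^sub>v q (i - 1)"
    and rec_p: "\<And>i. 1 \<le> i \<Longrightarrow> i < n \<Longrightarrow>
                   \<beta> (i + 1) \<cdot>\<^sub>v pp (i + 1) = A *\<^sub>v q i - \<alpha> i \<cdot>\<^sub>v pp i"
    and alpha_pos: "\<And>i. 1 \<le> i \<Longrightarrow> i \<le> n \<Longrightarrow> \<alpha> i > 0"
    and beta_pos: "\<And>i. 1 \<le> i \<Longrightarrow> i \<le> n \<Longrightarrow> \<beta> i > 0"
    and q_unit: "\<And>i. 1 \<le> i \<Longrightarrow> i \<le> n \<Longrightarrow> vnorm (q i) = 1"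
    and p_unit: "\<And>i. 1 \<le> i \<Longrightarrow> i \<le> n \<Longrightarrow> vnorm (pp i) = 1"
    (* orthogonal complements Q_k^perp *)
    and Qperp_dim: "\<And>j. 1 \<le> j \<Longrightarrow> j \<le> n \<Longrightarrow> Qperp j \<in> carrier_mat n (n - j)"
    and Qperp_on: "\<And>j. 1 \<le> j \<Longrightarrow> j \<le> n \<Longrightarrow> orthonormal_cols (Qperp j)"
    and Qperp_orth: "\<And>j. 1 \<le> j \<Longrightarrow> j \<le> n \<Longrightarrow> orthogonal_square (hcat (Qmat n q j) (Qperp j))"
    and k: "2 \<le> k" "k \<le> n - 1"
    and pk: "p \<ge> n - k"
  shows "kappa (L * Qperp k) \<ge> kappa (L * Qperp (k + 1))"
proof -
  have k1: "1 \<le> k" and kn: "k + 1 \<le> n" using k by auto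
  define r where "r = n - k"
  define r' where "r' = n - (k + 1)"
  define P where "P = Qperp k"
  define P' where "P' = Qperp (k+1)"
  define Qk where "Qk = Qmat n q k"
  define Q' where "Q' = Qmat n q (k+1)"
  have P: "P \<in> carrier_mat n r" unfolding P_def r_def using Qperp_dim[OF k1] kn by auto
  have P': "P' \<in> carrier_mat n r'" unfolding P'_def r'_def using Qperp_dim[of "k+1"] kn by auto
  have Qk: "Qk \<in> carrier_mat n k" unfolding Qk_def Qmat_def using mat_of_cols_carrier(1) by fastforce
  have Q': "Q' \<in> carrier_mat n (k+1)" unfolding Q'_def Qmat_def using mat_of_cols_carrier(1) by fastforce
  have rpos: "r > 0" unfolding r_def using kn by auto
  define M where "M = L * P"
  define N where "N = L * P'"
  have M: "M \<in> carrier_mat p r" unfolding M_def using L P by auto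
  have N: "N \<in> carrier_mat p r'" unfolding N_def using L P' by auto
  have smM: "sigma_max M \<ge> 0" "sigma_min M \<ge> 0"
    and x0M: "\<exists>x0\<in>carrier_vec r. x0 \<bullet> x0 = 1 \<and> sigma_max M = sqrt ((M *\<^sub>v x0) \<bullet> (M *\<^sub>v x0))"
    and maxM: "\<forall>x\<in>carrier_vec r. x \<bullet> x = 1 \<longrightarrow> (M *\<^sub>v x) \<bullet> (M *\<^sub>v x) \<le> (sigma_max M)^2"
    and x1M: "\<exists>x1\<in>carrier_vec r. x1 \<bullet> x1 = 1 \<and> sigma_min M = sqrt ((M *\<^sub>v x1) \<bullet> (M *\<^sub>v x1))"
    and minM: "\<forall>x\<in>carrier_vec r. x \<bullet> x = 1 \<longrightarrow> (sigma_min M)^2 \<le> (M *\<^sub>v x) \<bullet> (M *\<^sub>v x)"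
    using sv_char[OF M rpos] by blast+
  have gM: "L * Qperp k = M" unfolding M_def P_def ..
  have gN: "L * Qperp (k + 1) = N" unfolding N_def P'_def ..
  have minmax: "sigma_min M \<le> sigma_max M"
  proof -
    obtain x1 where x1: "x1 \<in> carrier_vec r" "x1 \<bullet> x1 = 1"
      "sigma_min M = sqrt ((M *\<^sub>v x1) \<bullet> (M *\<^sub>v x1))" using x1M by blast
    have h: "(M *\<^sub>v x1) \<bullet> (M *\<^sub>v x1) \<le> (sigma_max M)^2" using maxM x1 by blast
    show ?thesis unfolding x1(3) using real_sqrt_le_mono[OF h] smM by simp
  qed
  show ?thesis
  proof (cases "r' = 0")
    case True
    have kN: "kappa N = 1" unfolding kappa_def using N True by simp
    have dM: "dim_col M \<noteq> 0" using M rpos by simp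
    show ?thesis
    proof (cases "sigma_min M = 0")
      case True
      thus ?thesis unfolding gM gN kN using dM by (simp add: kappa_def)
    next
      case False
      hence pos: "sigma_min M > 0" using smM by simp
      have "1 \<le> sigma_max M / sigma_min M" using pos minmax by simp
      thus ?thesis unfolding gM gN kN using dM False by (simp add: kappa_def)
    qed
  next
    case False
    hence r'pos: "r' > 0" by simp
    have kr: "k + r = n" unfolding r_def using kn by simp
    have kr': "(k+1) + r' = n" unfolding r'_def using kn by simp
    have A: "Qk * transpose_mat Qk + P * transpose_mat P = 1\<^sub>m n"
      by (rule orth_split[OF Qk P kr]) (use Qperp_orth[OF k1] kn in \<open>simp add: Qk_def P_def\<close>)
    have o': "orthogonal_square (hcat Q' P')"
      using Qperp_orth[of "k+1"] kn unfolding Q'_def P'_def by simp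
    have B: "transpose_mat Qk * P' = 0\<^sub>m k r'"
    proof (rule eq_matI)
      fix i j assume "i < dim_row (0\<^sub>m k r' :: real mat)" "j < dim_col (0\<^sub>m k r' :: real mat)"
      hence i: "i < k" and j: "j < r'" by auto
      have "(transpose_mat Qk * P') $$ (i,j) = (\<Sum>l\<in>{0..<n}. Qk $$ (l,i) * P' $$ (l,j))"
        using Qk P' i j by (simp add: scalar_prod_def)
      also have "\<dots> = (\<Sum>l\<in>{0..<n}. Q' $$ (l,i) * P' $$ (l,j))"
        by (rule sum.cong) (use i in \<open>auto simp: Qk_def Q'_def Qmat_index\<close>)
      also have "\<dots> = 0" by (rule orth_block_zero[OF Q' P' kr' o']) (use i j in auto)
      finally show "(transpose_mat Qk * P') $$ (i,j) = 0\<^sub>m k r' $$ (i,j)" using i j by simp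
    qed (use Qk P' in auto)
    define W where "W = transpose_mat P * P'"
    have W: "W \<in> carrier_mat r r'" unfolding W_def using P P' by auto
    have C: "P * W = P'"
    proof -
      have "P' = 1\<^sub>m n * P'" using P' by simp
      also have "\<dots> = (Qk * transpose_mat Qk + P * transpose_mat P) * P'" unfolding A ..
      also have "\<dots> = Qk * transpose_mat Qk * P' + P * transpose_mat P * P'"
        by (rule add_mult_distrib_mat[of _ n n]) (use Qk P P' in auto)
      also have "Qk * transpose_mat Qk * P' = Qk * (transpose_mat Qk * P')"
        by (rule assoc_mult_mat[of _ n k _ n _ r']) (use Qk P' in auto)
      also have "\<dots> = 0\<^sub>m n r'" unfolding B using Qk by simp
      also have "P * transpose_mat P * P' = P * W"
        unfolding W_def by (rule assoc_mult_mat[of _ n r _ n _ r']) (use P P' in auto)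
      finally show ?thesis using P W by simp
    qed
    have on': "transpose_mat P' * P' = 1\<^sub>m r'"
      using Qperp_on[of "k+1"] kn P' unfolding orthonormal_cols_def P'_def by auto
    have D: "transpose_mat W * W = 1\<^sub>m r'"
    proof -
      have "transpose_mat W = transpose_mat P' * P" unfolding W_def
        using P P' by (simp add: transpose_mult[of _ r n _ r'])
      hence "transpose_mat W * W = (transpose_mat P' * P) * W" by simp
      also have "\<dots> = transpose_mat P' * (P * W)"
        by (rule assoc_mult_mat[of _ r' n _ r _ r']) (use P P' W in auto)
      finally show ?thesis unfolding C on' .
    qed
    have transfer: "\<exists>x\<in>carrier_vec r. x \<bullet> x = 1 \<and> M *\<^sub>v x = N *\<^sub>v y"
      if y: "y \<in> carrier_vec r'" "y \<bullet> y = 1" for y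
    proof (intro bexI conjI)
      show "W *\<^sub>v y \<in> carrier_vec r" using W y by simp
      have "(W *\<^sub>v y) \<bullet> (W *\<^sub>v y) = y \<bullet> ((transpose_mat W * W) *\<^sub>v y)"
        using MtM_quad[OF W y(1)] by simp
      also have "\<dots> = 1" unfolding D using y by simp
      finally show "(W *\<^sub>v y) \<bullet> (W *\<^sub>v y) = 1" .
      have "M *\<^sub>v (W *\<^sub>v y) = L *\<^sub>v (P *\<^sub>v (W *\<^sub>v y))"
        unfolding M_def using L P W y by simp
      also have "\<dots> = L *\<^sub>v ((P * W) *\<^sub>v y)" using P W y by simp
      also have "\<dots> = L *\<^sub>v (P' *\<^sub>v y)" unfolding C ..
      also have "\<dots> = N *\<^sub>v y" unfolding N_def using L P' y by simp
      finally show "M *\<^sub>v (W *\<^sub>v y) = N *\<^sub>v y" .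
    qed
    have smN: "sigma_max N \<ge> 0" "sigma_min N \<ge> 0"
      and x0N: "\<exists>x0\<in>carrier_vec r'. x0 \<bullet> x0 = 1 \<and> sigma_max N = sqrt ((N *\<^sub>v x0) \<bullet> (N *\<^sub>v x0))"
      and x1N: "\<exists>x1\<in>carrier_vec r'. x1 \<bullet> x1 = 1 \<and> sigma_min N = sqrt ((N *\<^sub>v x1) \<bullet> (N *\<^sub>v x1))"
      using sv_char[OF N r'pos] by blast+
    have maxle: "sigma_max N \<le> sigma_max M"
    proof -
      obtain y where y: "y \<in> carrier_vec r'" "y \<bullet> y = 1"
        "sigma_max N = sqrt ((N *\<^sub>v y) \<bullet> (N *\<^sub>v y))" using x0N by blast
      obtain x where x: "x \<in> carrier_vec r" "x \<bullet> x = 1" "M *\<^sub>v x = N *\<^sub>v y"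
        using transfer[OF y(1,2)] by blast
      have h: "(M *\<^sub>v x) \<bullet> (M *\<^sub>v x) \<le> (sigma_max M)^2" using maxM x by blast
      show ?thesis unfolding y(3) x(3)[symmetric] using real_sqrt_le_mono[OF h] smM by simp
    qed
    have minle: "sigma_min M \<le> sigma_min N"
    proof -
      obtain y where y: "y \<in> carrier_vec r'" "y \<bullet> y = 1"
        "sigma_min N = sqrt ((N *\<^sub>v y) \<bullet> (N *\<^sub>v y))" using x1N by blast
      obtain x where x: "x \<in> carrier_vec r" "x \<bullet> x = 1" "M *\<^sub>v x = N *\<^sub>v y"
        using transfer[OF y(1,2)] by blast
      have h: "(sigma_min M)^2 \<le> (M *\<^sub>v x) \<bullet> (M *\<^sub>v x)" using minM x by blast
      show ?thesis unfolding y(3) x(3)[symmetric] using real_sqrt_le_mono[OF h] smM by simp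
    qed
    have dM: "dim_col M \<noteq> 0" using M rpos by simp
    have dN: "dim_col N \<noteq> 0" using N r'pos by simp
    show ?thesis
    proof (cases "sigma_min M = 0")
      case True
      thus ?thesis unfolding gM gN
        kappa_def using dM by simp
    next
      case False
      hence pos: "sigma_min M > 0" using smM by simp
      hence posN: "sigma_min N > 0" using minle by simp
      have "sigma_max N / sigma_min N \<le> sigma_max M / sigma_min M"
        by (rule frac_le) (use smM maxle pos minle in auto)
      thus ?thesis unfolding gM gN
        kappa_def using dM dN False posN by simp
    qed
  qed
qed

end
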